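(* Let $\mathcal{X}$, $\mathcal{Y}$, $\mathcal{T}$ be finite sets, let $P_{XY}$ be a joint distribution on $\mathcal{X}\times\mathcal{Y}$, and let $P^\lambda_{T|X}$ be a stochastic mapping (conditional distribution) from $\mathcal{X}$ to $\mathcal{T}$, indexed by a hyperparameter $\lambda$. Let $I^\lambda(T;Y)$ denote the mutual information between $T$ and $Y$ under the joint distribution $P_{XY}(x,y)P^\lambda_{T|X}(t|x)$, and fix $\alpha \ge 0$. Let $\mathcal{D}_{\mathrm{MHT}} = \{(X_i,Y_i)\}_{i=1}^{n_{\mathrm{MHT}}}$ be drawn i.i.d. from $P_{XY}$, and for each $i$ let $T_i \sim P^\lambda_{T|X}(\cdot\mid X_i)$ independently. Let $\hat{I}^\lambda_{\mathcal{D}_{\mathrm{MHT}}}(T;Y)$ be the plug-in estimate $$\hat{I}^\lambda_{\mathcal{D}_{\mathrm{MHT}}}(T;Y)=\sum_{t\in\mathcal{T}}\sum_{y\in\mathcal{Y}}\hat{P}_{TY}(t,y)\log\frac{\hat{P}_{TY}(t,y)}{\hat{P}_T(t)\hat{P}_Y(y)},$$ where $\hat P_{TY}$ is the empirical joint distribution of $\{(T_i,Y_i)\}_{i=1}^{n_{\mathrm{MHT}}}$ and $\hat P_T,\hat P_Y$ are its marginals. For $\epsilon\in(0,1)$ define $$\theta(\epsilon,n_{\mathrm{MHT}})=\sqrt{\frac{2}{n_{\mathrm{MHT}}}\ln\!\left(\frac{2^{|\mathcal{T}||\mathcal{Y}|}-2}{\epsilon}\right)},$$ and $$\Delta I(\theta)=\begin{cases}\frac{\theta}{2}\log\big[(|\mathcal{T}||\mathcal{Y}|-1)(|\mathcal{T}|-1)(|\mathcal{Y}|-1)\big]+3h\!\left(\frac{\theta}{2}\right),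 & \text{if } \theta\le 2-\frac{2}{|\mathcal{T}|},\\ \log|\mathcal{T}|, & \text{if } \theta> 2-\frac{2}{|\mathcal{T}|},\end{cases}$$ with $h(x)=-x\log x-(1-x)\log(1-x)$. Define $$\hat{p}_\lambda=\inf\{\epsilon\in[0,1]:\ \hat{I}^\lambda_{\mathcal{D}_{\mathrm{MHT}}}(T;Y)-\Delta I(\theta(\epsilon,n_{\mathrm{MHT}}))\le\alpha\}.$$ Then $\hat p_\lambda$ is a valid $p$-value for the null hypothesis $\mathcal{H}_\lambda: I^\lambda(T;Y)<\alpha$, i.e., whenever $I^\lambda(T;Y)<\alpha$, we have $\Pr[\hat p_\lambda\le u]\le u$ for all $u\in[0,1]$, where the probability is over the draw of $\mathcal{D}_{\mathrm{MHT}}$ and of the $T_i$.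
   Context: All random variables take values in finite discrete alphabets. The same logarithm base is used in the plug-in estimator and in $\Delta I$ and $h$. *)

theory Defs
  imports "HOL-Probability.Probability"
begin

definition triple_pmf :: "('x \<times> 'y) pmf \<Rightarrow> ('x \<Rightarrow> 't pmf) \<Rightarrow> ('x \<times> 'y \<times> 't) pmf" where
  "triple_pmf P K = bind_pmf P (\<lambda>(x, y). map_pmf (\<lambda>t. (x, y, t)) (K x))"

definition sample_pmf :: "nat \<Rightarrow> ('x \<times> 'y) pmf \<Rightarrow> ('x \<Rightarrow> 't pmf) \<Rightarrow> (nat \<Rightarrow> 'x \<times> 'y \<times> 't) pmf" where
  "sample_pmf n P K = Pi_pmf {..<n} undefined (\<lambda>_. triple_pmf P K)"

definition mi_of :: "real \<Rightarrow> ('t::finite \<Rightarrow> 'y::finite \<Rightarrow> real) \<Rightarrow> real" where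
  "mi_of b Q = (\<Sum>t\<in>UNIV. \<Sum>y\<in>UNIV.
      if Q t y = 0 then 0
      else Q t y * log b (Q t y / ((\<Sum>y'\<in>UNIV. Q t y') * (\<Sum>t'\<in>UNIV. Q t' y))))"

definition true_MI :: "real \<Rightarrow> ('x::finite \<times> 'y::finite) pmf \<Rightarrow> ('x \<Rightarrow> 't::finite pmf) \<Rightarrow> real" where
  "true_MI b P K = mi_of b (\<lambda>t y. \<Sum>x\<in>UNIV. pmf P (x, y) * pmf (K x) t)"

definition emp_TY :: "nat \<Rightarrow> (nat \<Rightarrow> 'x \<times> 'y \<times> 't) \<Rightarrow> 't \<Rightarrow> 'y \<Rightarrow> real" where
  "emp_TY n \<omega> t y = real (card {i\<in>{..<n}. fst (snd (\<omega> i)) = y \<and> snd (snd (\<omega> i)) = t}) / real n"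

definition plugin_MI :: "real \<Rightarrow> nat \<Rightarrow> (nat \<Rightarrow> 'x \<times> 'y::finite \<times> 't::finite) \<Rightarrow> real" where
  "plugin_MI b n \<omega> = mi_of b (emp_TY n \<omega>)"

definition bin_ent :: "real \<Rightarrow> real \<Rightarrow> real" where
  "bin_ent b x = - x * log b x - (1 - x) * log b (1 - x)"

definition theta :: "'t::finite itself \<Rightarrow> 'y::finite itself \<Rightarrow> real \<Rightarrow> nat \<Rightarrow> real" where
  "theta _ _ \<epsilon> n =
     sqrt (2 / real n * ln ((2 ^ (CARD('t) * CARD('y)) - 2) / \<epsilon>))"

definition DeltaI :: "'t::finite itself \<Rightarrow> 'y::finite itself \<Rightarrow> real \<Rightarrow> real \<Rightarrow> real" where
  "DeltaI _ _ b \<theta> =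
     (if \<theta> \<le> 2 - 2 / real CARD('t)
      then \<theta> / 2 * log b (real ((CARD('t) * CARD('y) - 1) * (CARD('t) - 1) * (CARD('y) - 1)))
           + 3 * bin_ent b (\<theta> / 2)
      else log b (real CARD('t)))"

text \<open>p-value: infimum of the levels eps in (0,1] at which the test rejects
  (plug-in MI minus the deviation bound exceeds alpha); equals 1 if there is none.\<close>
definition pval :: "'t::finite itself \<Rightarrow> 'y::finite itself \<Rightarrow> real \<Rightarrow> real \<Rightarrow> nat \<Rightarrow>
                    (nat \<Rightarrow> 'x \<times> 'y \<times> 't) \<Rightarrow> real" where
  "pval TT YY b \<alpha> n \<omega> =
     Inf ({\<epsilon>\<in>{0<..1}. plugin_MI b n \<omega> - DeltaI TT YY b (theta TT YY \<epsilon> n) > \<alpha>} \<union> {1})"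

end

theory Submission
  imports Defs
begin


definition ent :: "real \<Rightarrow> ('a::finite \<Rightarrow> real) \<Rightarrow> real" where
  "ent b p = - (\<Sum>a\<in>UNIV. p a * log b (p a))"

definition tv :: "('a::finite \<Rightarrow> real) \<Rightarrow> ('a \<Rightarrow> real) \<Rightarrow> real" where
  "tv p q = (\<Sum>a\<in>UNIV. max 0 (p a - q a))"

definition fd :: "real \<Rightarrow> real \<Rightarrow> real \<Rightarrow> real" where
  "fd b d x = x * log b (d - 1) + bin_ent b x"

lemma gibbs:
  fixes J r :: "'a \<Rightarrow> real"
  assumes b: "b > 1" and fin: "finite S"
    and J: "\<And>s. s \<in> S \<Longrightarrow> J s \<ge> 0" and r: "\<And>s. s \<in> S \<Longrightarrow> r s \<ge> 0"
    and pos: "\<And>s. s \<in> S \<Longrightarrow> J s > 0 \<Longrightarrow> r s > 0"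
    and sums: "sum r S \<le> sum J S"
  shows "(\<Sum>s\<in>S. J s * log b (r s)) \<le> (\<Sum>s\<in>S. J s * log b (J s))"
proof -
  have lb: "ln b > 0" using b by simp
  have tm: "J s * log b (r s) - J s * log b (J s) \<le> (r s - J s) / ln b" if s: "s \<in> S" for s
  proof (cases "J s = 0")
    case True thus ?thesis using r[OF s] lb by simp
  next
    case False
    hence Jp: "J s > 0" using J[OF s] by simp
    have rp: "r s > 0" using pos[OF s Jp] .
    have "J s * log b (r s) - J s * log b (J s) = J s * ln (r s / J s) / ln b"
      using Jp rp lb by (simp add: log_def ln_div diff_divide_distrib right_diff_distrib)
    also have "\<dots> \<le> J s * (r s / J s - 1) / ln b"
      using ln_le_minus_one[of "r s / J s"] Jp rp lb
      by (intro divide_right_mono mult_left_mono) auto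
    also have "\<dots> = (r s - J s) / ln b" using Jp by (simp add: right_diff_distrib)
    finally show ?thesis .
  qed
  have "(\<Sum>s\<in>S. J s * log b (r s)) - (\<Sum>s\<in>S. J s * log b (J s))
        = (\<Sum>s\<in>S. J s * log b (r s) - J s * log b (J s))" by (simp add: sum_subtractf)
  also have "\<dots> \<le> (\<Sum>s\<in>S. (r s - J s) / ln b)" by (intro sum_mono tm)
  also have "\<dots> = (sum r S - sum J S) / ln b" by (simp add: sum_divide_distrib[symmetric] sum_subtractf)
  also have "\<dots> \<le> 0" using sums lb by (simp add: divide_nonpos_pos)
  finally show ?thesis by simp
qed

lemma sum_UNIV_prod: "(\<Sum>z\<in>(UNIV::('a::finite \<times> 'b::finite) set). f z) = (\<Sum>a\<in>UNIV. \<Sum>c\<in>UNIV. f (a, c))"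
  by (simp add: sum.cartesian_product UNIV_Times_UNIV[symmetric] del: UNIV_Times_UNIV)

lemma gibbs2:
  fixes J r :: "'a::finite \<Rightarrow> 'b::finite \<Rightarrow> real"
  assumes b: "b > 1"
    and J: "\<And>s t. J s t \<ge> 0" and r: "\<And>s t. r s t \<ge> 0"
    and pos: "\<And>s t. J s t > 0 \<Longrightarrow> r s t > 0"
    and sums: "(\<Sum>s\<in>UNIV. \<Sum>t\<in>UNIV. r s t) \<le> (\<Sum>s\<in>UNIV. \<Sum>t\<in>UNIV. J s t)"
  shows "(\<Sum>s\<in>UNIV. \<Sum>t\<in>UNIV. J s t * log b (r s t)) \<le> (\<Sum>s\<in>UNIV. \<Sum>t\<in>UNIV. J s t * log b (J s t))"
  using gibbs[OF b, of UNIV "\<lambda>z. J (fst z) (snd z)" "\<lambda>z. r (fst z) (snd z)"] assms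
  by (simp add: sum_UNIV_prod)



lemma sum_if_eq: "(\<Sum>a\<in>(UNIV::'a::finite set). if a = a' then x else y) = x + (real CARD('a) - 1) * y"
proof -
  have "(\<Sum>a\<in>(UNIV::'a set). if a = a' then x else y) = (\<Sum>a\<in>(UNIV::'a set). y + (if a = a' then x - y else 0))"
    by (intro sum.cong) auto
  also have "\<dots> = real CARD('a) * y + (x - y)" by (simp add: sum.distrib)
  finally show ?thesis by (simp add: algebra_simps)
qed

lemma FA:
  fixes p q :: "'a::finite \<Rightarrow> real"
  assumes b: "b > 1" and p0: "\<And>a. p a \<ge> 0" and q0: "\<And>a. q a \<ge> 0"
    and p1: "sum p UNIV = 1" and q1: "sum q UNIV = 1"
  shows "ent b p \<le> ent b q + fd b (real CARD('a)) (tv p q)"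
proof -
  define m where "m a = min (p a) (q a)" for a
  define e where "e = tv p q"
  define d where "d = real CARD('a)"
  have m0: "m a \<ge> 0" for a using p0 q0 by (simp add: m_def)
  have pm: "p a - m a = max 0 (p a - q a)" for a by (auto simp: m_def)
  have e_eq: "e = (\<Sum>a\<in>UNIV. p a - m a)" by (simp add: e_def tv_def pm)
  have sm: "sum m UNIV = 1 - e" using p1 e_eq by (simp add: sum_subtractf)
  have qm: "(\<Sum>a\<in>UNIV. q a - m a) = e" using q1 sm by (simp add: sum_subtractf)
  have e0: "e \<ge> 0" by (simp add: e_def tv_def sum_nonneg)
  have e1: "e \<le> 1" using sm sum_nonneg[of UNIV m] m0 by simp
  have pmn: "p a - m a \<ge> 0" for a by (simp add: pm)
  have qmn: "q a - m a \<ge> 0" for a by (simp add: m_def)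
  have pz: "p a - m a = 0" if "e = 0" for a
    using that e_eq pmn sum_nonneg_eq_0_iff[of UNIV "\<lambda>a. p a - m a"] by simp
  have qz: "q a - m a = 0" if "e = 0" for a
    using that qm qmn sum_nonneg_eq_0_iff[of UNIV "\<lambda>a. q a - m a"] by simp
  have prod0: "(p a - m a) * (q a - m a) = 0" for a by (auto simp: m_def min_def)
  define J where "J a a' = (p a - m a) * (q a' - m a') / e + (if a = a' then m a else 0)" for a a'
  have J0: "J a a' \<ge> 0" for a a' using pmn qmn m0 e0 by (simp add: J_def)
  have row: "(\<Sum>a'\<in>UNIV. J a a') = p a" for a
  proof -
    have "(\<Sum>a'\<in>UNIV. J a a') = (p a - m a) * (\<Sum>a'\<in>UNIV. q a' - m a') / e + m a"
      by (simp add: J_def sum.distrib sum_distrib_left sum_divide_distrib[symmetric])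
    also have "\<dots> = p a" using qm pz by (cases "e = 0") auto
    finally show ?thesis .
  qed
  have col: "(\<Sum>a\<in>UNIV. J a a') = q a'" for a'
  proof -
    have "(\<Sum>a\<in>UNIV. J a a') = (\<Sum>a\<in>UNIV. p a - m a) * (q a' - m a') / e + m a'"
    proof -
      have "(\<Sum>a\<in>UNIV. J a a') = (\<Sum>a\<in>UNIV. (p a - m a) * (q a' - m a') / e) + (\<Sum>a\<in>UNIV. if a = a' then m a else 0)"
        unfolding J_def by (rule sum.distrib)
      also have "(\<Sum>a\<in>UNIV. (p a - m a) * (q a' - m a') / e) = (\<Sum>a\<in>UNIV. p a - m a) * (q a' - m a') / e"
        by (simp add: sum_distrib_right sum_divide_distrib)
      finally show ?thesis by simp
    qed
    also have "\<dots> = q a'" using e_eq qz by (cases "e = 0") auto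
    finally show ?thesis .
  qed
  have diag: "J a a = m a" for a using prod0[of a] by (simp add: J_def)
  have Jtot: "(\<Sum>a\<in>UNIV. \<Sum>a'\<in>UNIV. J a a') = 1" using row p1 by simp
  have stepA: "ent b p \<le> - (\<Sum>a\<in>UNIV. \<Sum>a'\<in>UNIV. J a a' * log b (J a a'))"
  proof -
    have "ent b p = - (\<Sum>a\<in>UNIV. \<Sum>a'\<in>UNIV. J a a' * log b (p a))"
      by (simp add: ent_def sum_distrib_right[symmetric] row)
    moreover have "J a a' * log b (J a a') \<le> J a a' * log b (p a)" for a a'
    proof (cases "J a a' = 0")
      case False
      hence Jp: "J a a' > 0" using J0[of a a'] by simp
      have "J a a' \<le> p a" using member_le_sum[of a' UNIV "J a"] J0 row[of a] by simp
      hence "log b (J a a') \<le> log b (p a)" using Jp b by simp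
      thus ?thesis using Jp by (simp add: mult_left_mono)
    qed simp
    hence "(\<Sum>a\<in>UNIV. \<Sum>a'\<in>UNIV. J a a' * log b (J a a')) \<le> (\<Sum>a\<in>UNIV. \<Sum>a'\<in>UNIV. J a a' * log b (p a))"
      by (intro sum_mono) auto
    ultimately show ?thesis by simp
  qed
  define r where "r a a' = q a' * (if a = a' then 1 - e else e / (d - 1))" for a a'
  have d1: "d \<ge> 1" by (simp add: d_def)
  have r0: "r a a' \<ge> 0" for a a' using q0 e1 e0 d1 by (simp add: r_def)
  have inner: "(\<Sum>a\<in>UNIV. (if a = a' then 1 - e else e / (d - 1))) \<le> 1" for a' :: 'a
  proof -
    have "(\<Sum>a\<in>UNIV. (if a = a' then 1 - e else e / (d - 1))) = 1 - e + (d - 1) * (e / (d - 1))"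
      unfolding d_def by (rule sum_if_eq)
    also have "\<dots> \<le> 1" using d1 e0 by (cases "d = 1") auto
    finally show ?thesis .
  qed
  have rsum: "(\<Sum>a\<in>UNIV. \<Sum>a'\<in>UNIV. r a a') \<le> (\<Sum>a\<in>UNIV. \<Sum>a'\<in>UNIV. J a a')"
  proof -
    have "(\<Sum>a\<in>UNIV. \<Sum>a'\<in>UNIV. r a a') = (\<Sum>a'\<in>UNIV. q a' * (\<Sum>a\<in>UNIV. (if a = a' then 1 - e else e / (d - 1))))"
      by (subst sum.swap) (simp add: r_def sum_distrib_left)
    also have "\<dots> \<le> (\<Sum>a'\<in>UNIV. q a' * 1)"
      by (intro sum_mono mult_left_mono inner q0)
    finally show ?thesis using q1 Jtot by simp
  qed
  have card2: "d - 1 > 0" if "a \<noteq> (a'::'a)" for a a'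
  proof -
    have "card {a, a'} \<le> CARD('a)" by (rule card_mono) auto
    thus ?thesis using that by (simp add: d_def)
  qed
  have rpos: "r a a' > 0" if "J a a' > 0" for a a'
  proof (cases "a = a'")
    case True
    hence "m a > 0" using that diag by simp
    moreover have "m a \<le> sum m UNIV" using member_le_sum[of a UNIV m] m0 by simp
    ultimately have "1 - e > 0" "q a > 0" using sm by (auto simp: m_def)
    thus ?thesis using True by (simp add: r_def)
  next
    case False
    hence "(p a - m a) * (q a' - m a') / e > 0" using that by (simp add: J_def)
    hence "e > 0" "q a' - m a' > 0" using pmn[of a] qmn[of a'] e0
      by (auto simp: zero_less_divide_iff zero_less_mult_iff)
    hence "q a' > 0" using m0[of a'] by simp
    thus ?thesis using False card2[OF False] \<open>e > 0\<close> by (simp add: r_def)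
  qed
  have stepB: "(\<Sum>a\<in>UNIV. \<Sum>a'\<in>UNIV. J a a' * log b (r a a')) \<le> (\<Sum>a\<in>UNIV. \<Sum>a'\<in>UNIV. J a a' * log b (J a a'))"
    by (rule gibbs2[OF b J0 r0 rpos rsum])
  define k where "k = log b (1 - e) - log b e + log b (d - 1)"
  have tmC: "J a a' * log b (r a a') = J a a' * log b (q a') + J a a' * (log b e - log b (d - 1)) + (if a = a' then J a a' * k else 0)" for a a'
  proof (cases "J a a' = 0")
    case False
    hence Jp: "J a a' > 0" using J0[of a a'] by simp
    hence rp: "r a a' > 0" by (rule rpos)
    show ?thesis
    proof (cases "a = a'")
      case True
      hence "q a' > 0" "1 - e > 0" using rp q0[of a'] e1 by (auto simp: r_def zero_less_mult_iff)
      hence "log b (r a a') = log b (q a') + log b (1 - e)" using True by (simp add: r_def log_mult)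
      thus ?thesis using True by (simp add: k_def algebra_simps)
    next
      case F: False
      hence "q a' > 0" "e > 0" "d - 1 > 0" using rp q0[of a'] e0 card2[OF F]
        by (auto simp: r_def zero_less_mult_iff zero_less_divide_iff)
      hence "log b (r a a') = log b (q a') + (log b e - log b (d - 1))" using F by (simp add: r_def log_mult log_divide)
      thus ?thesis using F by (simp add: distrib_left[symmetric] right_diff_distrib[symmetric])
    qed
  qed auto
  have "(\<Sum>a\<in>UNIV. \<Sum>a'\<in>UNIV. J a a' * log b (r a a')) =
        (\<Sum>a\<in>UNIV. \<Sum>a'\<in>UNIV. J a a' * log b (q a')) + (\<Sum>a\<in>UNIV. \<Sum>a'\<in>UNIV. J a a') * (log b e - log b (d - 1))
         + (\<Sum>a\<in>UNIV. J a a * k)"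
    by (simp add: tmC sum.distrib sum_distrib_right)
  also have "(\<Sum>a\<in>UNIV. \<Sum>a'\<in>UNIV. J a a' * log b (q a')) = - ent b q"
    by (subst sum.swap) (simp add: sum_distrib_right[symmetric] col ent_def)
  also have "(\<Sum>a\<in>UNIV. J a a * k) = (1 - e) * k" by (simp add: diag sm sum_distrib_right[symmetric])
  finally have stepC: "(\<Sum>a\<in>UNIV. \<Sum>a'\<in>UNIV. J a a' * log b (r a a')) = - ent b q + (log b e - log b (d - 1)) + (1 - e) * k"
    using Jtot by simp
  have "fd b d e = - ((log b e - log b (d - 1)) + (1 - e) * k)"
    by (simp add: fd_def bin_ent_def k_def algebra_simps)
  hence "ent b q + fd b d e = - (\<Sum>a\<in>UNIV. \<Sum>a'\<in>UNIV. J a a' * log b (r a a'))" using stepC by simp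
  thus ?thesis using stepA stepB by (simp add: d_def e_def)
qed



lemma bin_ent_nonneg:
  assumes b: "b > 1" and x: "0 \<le> x" "x \<le> 1"
  shows "bin_ent b x \<ge> 0"
proof -
  have h: "t * log b t \<le> 0" if "0 \<le> t" "t \<le> 1" for t
  proof (cases "t = 0")
    case False
    hence "log b t \<le> 0" using that b by simp
    thus ?thesis using that by (simp add: mult_nonneg_nonpos)
  qed simp
  show ?thesis using h[of x] h[of "1 - x"] x by (simp add: bin_ent_def)
qed

lemma log_nat_nonneg: "b > 1 \<Longrightarrow> log b (real (N::nat)) \<ge> 0"
  by (cases "N = 0") (simp add: log_def, simp)

lemma log_card_minus1_nonneg: "b > 1 \<Longrightarrow> log b (real (N::nat) - 1) \<ge> 0"
proof -
  assume b: "b > 1"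
  show ?thesis
  proof (cases "N \<ge> 1")
    case True
    hence e: "real N - 1 = real (N - 1)" by simp
    show ?thesis unfolding e by (rule log_nat_nonneg[OF b])
  next
    case False
    hence "N = 0" by simp
    thus ?thesis by (simp add: log_def ln_minus)
  qed
qed

lemma fd_nonneg:
  assumes b: "b > 1" and x: "0 \<le> x" "x \<le> 1"
  shows "fd b (real N) x \<ge> 0"
  using bin_ent_nonneg[OF b x] log_card_minus1_nonneg[OF b, of N] x
  by (simp add: fd_def)

lemma fd_zero: "fd b d 0 = 0" by (simp add: fd_def bin_ent_def)

lemma fd_mono:
  assumes b: "b > 1" and N: "N \<ge> 1" and xy: "0 \<le> x" "x \<le> y" and y: "y \<le> 1 - 1 / real N"
  shows "fd b (real N) x \<le> fd b (real N) y"
proof (cases "x = 0")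
  case True
  have "1 / real N \<ge> 0" by simp
  hence "y \<le> 1" using y by linarith
  thus ?thesis using True fd_nonneg[OF b, of y N] xy by (simp add: fd_zero)
next
  case False
  hence x0: "x > 0" using xy by simp
  have "1 / real N > 0" using N by simp
  hence y1: "y < 1" using y by linarith
  have N2: "N \<ge> 2"
  proof (rule ccontr)
    assume "\<not> N \<ge> 2" hence "N = 1" using N by simp
    thus False using y xy x0 by simp
  qed
  define c where "c = log b (real N - 1)"
  have f_eq: "fd b (real N) = (\<lambda>x. x * c + (- x * log b x - (1 - x) * log b (1 - x)))"
    by (auto simp: fd_def bin_ent_def c_def fun_eq_iff)
  have "(\<lambda>x. x * c + (- x * log b x - (1 - x) * log b (1 - x))) x \<le> (\<lambda>x. x * c + (- x * log b x - (1 - x) * log b (1 - x))) y"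
  proof (rule DERIV_nonneg_imp_increasing_open[OF xy(2)])
    fix z assume z: "x < z" "z < y"
    hence z01: "0 < z" "z < 1" using x0 y1 by auto
    have "((\<lambda>x. x * c + (- x * log b x - (1 - x) * log b (1 - x))) has_real_derivative (c - log b z + log b (1 - z))) (at z)"
      using z01 b by (auto intro!: derivative_eq_intros)
    moreover have "c - log b z + log b (1 - z) \<ge> 0"
    proof -
      have Nr: "real N \<ge> 2" using N2 by simp
      have "z \<le> 1 - 1 / real N" using z y by simp
      hence "z * real N \<le> real N - 1" using Nr by (simp add: field_simps)
      hence "z \<le> (real N - 1) * (1 - z)" by (simp add: algebra_simps)
      hence "log b z \<le> log b ((real N - 1) * (1 - z))" using z01 b Nr by simp
      also have "\<dots> = c + log b (1 - z)" using z01 Nr by (simp add: c_def log_mult)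
      finally show ?thesis by simp
    qed
    ultimately show "\<exists>d. ((\<lambda>x. x * c + (- x * log b x - (1 - x) * log b (1 - x))) has_real_derivative d) (at z) \<and> 0 \<le> d"
      by blast
  next
    show "continuous_on {x..y} (\<lambda>x. x * c + (- x * log b x - (1 - x) * log b (1 - x)))"
      using x0 y1 b by (intro continuous_intros) auto
  qed
  thus ?thesis using f_eq by simp
qed

lemma fd_at_top:
  assumes b: "b > 1" and N: "N \<ge> 1"
  shows "fd b (real N) (1 - 1 / real N) = log b (real N)"
proof (cases "N = 1")
  case True thus ?thesis by (simp add: fd_def bin_ent_def)
next
  case False
  hence Nr: "real N \<ge> 2" using N by simp
  have e1: "1 - (1 - 1 / real N) = 1 / real N" by simp
  have e2: "1 - 1 / real N = (real N - 1) / real N" using Nr by (simp add: field_simps)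
  have "fd b (real N) (1 - 1 / real N) = (1 - 1 / real N) * log b (real N - 1)
      - (1 - 1 / real N) * (log b (real N - 1) - log b (real N)) - 1 / real N * (- log b (real N))"
    unfolding fd_def bin_ent_def e1
    apply (subst (3) e2) using Nr apply (simp add: log_divide log_inverse)
    by (metis minus_diff_eq mult_minus_left)
  also have "\<dots> = log b (real N)" by (simp add: algebra_simps)
  finally show ?thesis .
qed

lemma fd_le_bigger_d:
  assumes b: "b > 1" and x: "x \<ge> 0" and MN: "M \<le> N" and M: "M \<ge> 1"
  shows "fd b (real M) x \<le> fd b (real N) x"
proof -
  have "log b (real M - 1) \<le> log b (real N - 1)"
  proof (cases "M = 1")
    case True
    hence "log b (real M - 1) = 0" by (simp add: log_def)
    thus ?thesis using log_card_minus1_nonneg[OF b, of N] by simp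
  next
    case False thus ?thesis using MN M b by simp
  qed
  thus ?thesis using x by (simp add: fd_def mult_left_mono)
qed



definition margT :: "('t::finite \<Rightarrow> 'y::finite \<Rightarrow> real) \<Rightarrow> 't \<Rightarrow> real" where
  "margT Q t = (\<Sum>y\<in>UNIV. Q t y)"
definition margY :: "('t::finite \<Rightarrow> 'y::finite \<Rightarrow> real) \<Rightarrow> 'y \<Rightarrow> real" where
  "margY Q y = (\<Sum>t\<in>UNIV. Q t y)"
definition jnt :: "('t::finite \<Rightarrow> 'y::finite \<Rightarrow> real) \<Rightarrow> 't \<times> 'y \<Rightarrow> real" where
  "jnt Q z = Q (fst z) (snd z)"

definition distr2 :: "('t::finite \<Rightarrow> 'y::finite \<Rightarrow> real) \<Rightarrow> bool" where
  "distr2 Q \<longleftrightarrow> (\<forall>t y. Q t y \<ge> 0) \<and> (\<Sum>t\<in>UNIV. \<Sum>y\<in>UNIV. Q t y) = 1"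

lemma distr2_facts:
  assumes "distr2 Q"
  shows "\<And>t y. Q t y \<ge> 0" "\<And>t. margT Q t \<ge> 0" "\<And>y. margY Q y \<ge> 0" "\<And>z. jnt Q z \<ge> 0"
    "sum (margT Q) UNIV = 1" "sum (margY Q) UNIV = 1" "sum (jnt Q) UNIV = 1"
    "\<And>t y. Q t y \<le> margT Q t" "\<And>t y. Q t y \<le> margY Q y"
  using assms
  by (auto simp: distr2_def margT_def margY_def jnt_def sum_nonneg sum_UNIV_prod
      intro!: member_le_sum[where f="\<lambda>y. Q _ y", simplified] member_le_sum[where f="\<lambda>t. Q t _", simplified]
      intro: trans[OF sum.swap])

lemma mi_decomp:
  assumes Q0: "\<And>t y. Q t y \<ge> 0"
  shows "mi_of b Q = ent b (margT Q) + ent b (margY Q) - ent b (jnt Q)"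
proof -
  have leT: "Q t y \<le> margT Q t" for t y
    unfolding margT_def using Q0 by (intro member_le_sum) auto
  have leY: "Q t y \<le> margY Q y" for t y
    unfolding margY_def using Q0 by (intro member_le_sum[where f="\<lambda>t. Q t y"]) auto
  have tm: "(if Q t y = 0 then 0 else Q t y * log b (Q t y / ((\<Sum>y'\<in>UNIV. Q t y') * (\<Sum>t'\<in>UNIV. Q t' y))))
      = Q t y * log b (Q t y) - Q t y * log b (margT Q t) - Q t y * log b (margY Q y)" for t y
  proof (cases "Q t y = 0")
    case False
    hence p: "Q t y > 0" using Q0[of t y] by simp
    hence "margT Q t > 0" "margY Q y > 0" using leT[of t y] leY[of t y] by auto
    thus ?thesis using p
      by (simp add: margT_def[symmetric] margY_def[symmetric] log_divide log_mult algebra_simps)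
  qed simp
  have "mi_of b Q = (\<Sum>t\<in>UNIV. \<Sum>y\<in>UNIV. Q t y * log b (Q t y)) - (\<Sum>t\<in>UNIV. \<Sum>y\<in>UNIV. Q t y * log b (margT Q t))
      - (\<Sum>t\<in>UNIV. \<Sum>y\<in>UNIV. Q t y * log b (margY Q y))"
    unfolding mi_of_def tm by (simp add: sum_subtractf)
  also have "(\<Sum>t\<in>UNIV. \<Sum>y\<in>UNIV. Q t y * log b (margT Q t)) = - ent b (margT Q)"
    by (simp add: ent_def sum_distrib_right[symmetric] margT_def[symmetric])
  also have "(\<Sum>t\<in>UNIV. \<Sum>y\<in>UNIV. Q t y * log b (margY Q y)) = - ent b (margY Q)"
    by (subst sum.swap) (simp add: ent_def sum_distrib_right[symmetric] margY_def[symmetric])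
  also have "(\<Sum>t\<in>UNIV. \<Sum>y\<in>UNIV. Q t y * log b (Q t y)) = - ent b (jnt Q)"
    by (simp add: ent_def sum_UNIV_prod jnt_def)
  finally show ?thesis by simp
qed

lemma ent_le_log_card:
  fixes p :: "'a::finite \<Rightarrow> real"
  assumes b: "b > 1" and p0: "\<And>a. p a \<ge> 0" and p1: "sum p UNIV = 1"
  shows "ent b p \<le> log b (real CARD('a))"
proof -
  have c: "real CARD('a) > 0" by simp
  have "(\<Sum>a\<in>UNIV. p a * log b (1 / real CARD('a))) \<le> (\<Sum>a\<in>UNIV. p a * log b (p a))"
    using c by (intro gibbs[OF b]) (auto simp: p0 p1)
  moreover have "(\<Sum>a\<in>UNIV. p a * log b (1 / real CARD('a))) = - log b (real CARD('a))"
    by (subst sum_distrib_right[symmetric]) (simp add: p1 log_divide)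
  ultimately show ?thesis by (simp add: ent_def)
qed

lemma xlog_mono:
  assumes b: "b > 1" and "0 \<le> p" "p \<le> q"
  shows "p * log b p \<le> p * log b q"
proof (cases "p = 0")
  case False
  thus ?thesis using assms by (intro mult_left_mono) auto
qed simp

lemma ent_mono_pointwise:
  fixes p :: "'a::finite \<Rightarrow> real"
  assumes b: "b > 1" and "\<And>a. p a \<ge> 0" and "\<And>a. p a \<le> q a"
  shows "(\<Sum>a\<in>UNIV. p a * log b (p a)) \<le> (\<Sum>a\<in>UNIV. p a * log b (q a))"
proof (intro sum_mono)
  fix a
  show "p a * log b (p a) \<le> p a * log b (q a)"
  proof (cases "p a = 0")
    case False
    hence "p a > 0" using assms(2)[of a] by simp
    thus ?thesis using assms(3)[of a] b by (intro mult_left_mono) auto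
  qed simp
qed

lemma ent_jnt_ge:
  assumes b: "b > 1" and Q: "distr2 Q"
  shows "ent b (jnt Q) \<ge> ent b (margY Q)" "ent b (jnt Q) \<ge> ent b (margT Q)"
proof -
  note f = distr2_facts[OF Q]
  have "(\<Sum>t\<in>UNIV. \<Sum>y\<in>UNIV. Q t y * log b (Q t y)) \<le> (\<Sum>t\<in>UNIV. \<Sum>y\<in>UNIV. Q t y * log b (margY Q y))"
    by (intro sum_mono ent_mono_pointwise[OF b] f)
  also have "\<dots> = - ent b (margY Q)"
    by (subst sum.swap) (simp add: ent_def sum_distrib_right[symmetric] margY_def[symmetric])
  finally show "ent b (jnt Q) \<ge> ent b (margY Q)" by (simp add: ent_def sum_UNIV_prod jnt_def)
  have "(\<Sum>t\<in>UNIV. \<Sum>y\<in>UNIV. Q t y * log b (Q t y)) \<le> (\<Sum>t\<in>UNIV. \<Sum>y\<in>UNIV. Q t y * log b (margT Q t))"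
    by (intro sum_mono xlog_mono[OF b] f)
  also have "\<dots> = - ent b (margT Q)"
    by (simp add: ent_def sum_distrib_right[symmetric] margT_def[symmetric])
  finally show "ent b (jnt Q) \<ge> ent b (margT Q)" by (simp add: ent_def sum_UNIV_prod jnt_def)
qed

lemma mi_nonneg:
  assumes b: "b > 1" and Q: "distr2 Q"
  shows "mi_of b Q \<ge> 0"
proof -
  note f = distr2_facts[OF Q]
  define r where "r t y = margT Q t * margY Q y" for t y
  have "(\<Sum>t\<in>UNIV. \<Sum>y\<in>UNIV. Q t y * log b (r t y)) \<le> (\<Sum>t\<in>UNIV. \<Sum>y\<in>UNIV. Q t y * log b (Q t y))"
  proof (rule gibbs2[OF b])
    show "0 \<le> Q s t" for s t by (rule f(1))
    show "0 \<le> r s t" for s t using f(2,3) by (simp add: r_def)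
    show "0 < r s t" if "0 < Q s t" for s t
      using that f(8)[of s t] f(9)[of s t] by (simp add: r_def)
    have "(\<Sum>t\<in>UNIV. \<Sum>y\<in>UNIV. r t y) = sum (margT Q) UNIV * sum (margY Q) UNIV"
      by (simp add: r_def sum_product)
    thus "(\<Sum>t\<in>UNIV. \<Sum>y\<in>UNIV. r t y) \<le> (\<Sum>t\<in>UNIV. \<Sum>y\<in>UNIV. Q t y)"
      using f(5,6) Q by (simp add: distr2_def)
  qed
  moreover have "Q t y * log b (r t y) = Q t y * log b (margT Q t) + Q t y * log b (margY Q y)" for t y
  proof (cases "Q t y = 0")
    case False
    hence "Q t y > 0" using f(1)[of t y] by simp
    hence "margT Q t > 0" "margY Q y > 0" using f(8)[of t y] f(9)[of t y] by auto
    thus ?thesis by (simp add: r_def log_mult distrib_left)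
  qed simp
  hence "(\<Sum>t\<in>UNIV. \<Sum>y\<in>UNIV. Q t y * log b (r t y)) = - ent b (margT Q) - ent b (margY Q)"
    apply (simp add: sum.distrib)
    apply (subst (2) sum.swap)
    by (simp add: ent_def sum_distrib_right[symmetric] margY_def[symmetric] margT_def[symmetric])
  moreover have "(\<Sum>t\<in>UNIV. \<Sum>y\<in>UNIV. Q t y * log b (Q t y)) = - ent b (jnt Q)"
    by (simp add: ent_def sum_UNIV_prod jnt_def)
  ultimately show ?thesis using mi_decomp[of Q, OF f(1)] by simp
qed

lemma mi_le_logs:
  fixes Q :: "'t::finite \<Rightarrow> 'y::finite \<Rightarrow> real"
  assumes b: "b > 1" and Q: "distr2 Q"
  shows "mi_of b Q \<le> log b (real CARD('t))" "mi_of b Q \<le> log b (real CARD('y))"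
proof -
  note f = distr2_facts[OF Q]
  show "mi_of b Q \<le> log b (real CARD('t))"
    using mi_decomp[of Q, OF f(1)] ent_jnt_ge[OF b Q] ent_le_log_card[OF b f(2) f(5)] by simp
  show "mi_of b Q \<le> log b (real CARD('y))"
    using mi_decomp[of Q, OF f(1)] ent_jnt_ge[OF b Q] ent_le_log_card[OF b f(3) f(6)] by simp
qed



lemma tv_sym:
  fixes p q :: "'a::finite \<Rightarrow> real"
  assumes "sum p UNIV = 1" "sum q UNIV = 1"
  shows "tv p q = tv q p"
proof -
  have "tv p q - tv q p = (\<Sum>a\<in>UNIV. max 0 (p a - q a) - max 0 (q a - p a))"
    by (simp add: tv_def sum_subtractf)
  also have "\<dots> = (\<Sum>a\<in>UNIV. p a - q a)" by (intro sum.cong) auto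
  also have "\<dots> = 0" using assms by (simp add: sum_subtractf)
  finally show ?thesis by simp
qed

lemma tv_nonneg: "tv p q \<ge> 0" by (simp add: tv_def sum_nonneg)

lemma max0_sum_le: "max 0 (\<Sum>i\<in>A. f i) \<le> (\<Sum>i\<in>A. max 0 (f i :: real))"
proof -
  have "(\<Sum>i\<in>A. f i) \<le> (\<Sum>i\<in>A. max 0 (f i))" by (intro sum_mono) auto
  moreover have "0 \<le> (\<Sum>i\<in>A. max 0 (f i))" by (intro sum_nonneg) auto
  ultimately show ?thesis by simp
qed

lemma tv_margT_le: "tv (margT R) (margT Q) \<le> tv (jnt R) (jnt Q)"
proof -
  have "tv (margT R) (margT Q) = (\<Sum>t\<in>UNIV. max 0 (\<Sum>y\<in>UNIV. R t y - Q t y))"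
    by (simp add: tv_def margT_def sum_subtractf)
  also have "\<dots> \<le> (\<Sum>t\<in>UNIV. \<Sum>y\<in>UNIV. max 0 (R t y - Q t y))"
    by (intro sum_mono max0_sum_le)
  also have "\<dots> = tv (jnt R) (jnt Q)" by (simp add: tv_def sum_UNIV_prod jnt_def)
  finally show ?thesis .
qed

lemma tv_margY_le: "tv (margY R) (margY Q) \<le> tv (jnt R) (jnt Q)"
proof -
  have "tv (margY R) (margY Q) = (\<Sum>y\<in>UNIV. max 0 (\<Sum>t\<in>UNIV. R t y - Q t y))"
    by (simp add: tv_def margY_def sum_subtractf)
  also have "\<dots> \<le> (\<Sum>y\<in>UNIV. \<Sum>t\<in>UNIV. max 0 (R t y - Q t y))"
    by (intro sum_mono max0_sum_le)
  also have "\<dots> = tv (jnt R) (jnt Q)" by (subst sum.swap) (simp add: tv_def sum_UNIV_prod jnt_def)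
  finally show ?thesis .
qed

lemma FA2:
  fixes p q :: "'a::finite \<Rightarrow> real"
  assumes b: "b > 1" and p0: "\<And>a. p a \<ge> 0" and q0: "\<And>a. q a \<ge> 0"
    and p1: "sum p UNIV = 1" and q1: "sum q UNIV = 1"
    and x: "tv p q \<le> x" and x1: "x \<le> 1 - 1 / real CARD('a)"
  shows "ent b p - ent b q \<le> fd b (real CARD('a)) x"
proof -
  have "ent b p - ent b q \<le> fd b (real CARD('a)) (tv p q)" using FA[OF b p0 q0 p1 q1] by simp
  also have "\<dots> \<le> fd b (real CARD('a)) x"
    by (rule fd_mono[OF b _ tv_nonneg x x1]) (simp add: Suc_le_eq)
  finally show ?thesis .
qed

lemma mi_cont:
  fixes Q R :: "'t::finite \<Rightarrow> 'y::finite \<Rightarrow> real"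
  assumes b: "b > 1" and Q: "distr2 Q" and R: "distr2 R"
    and th: "2 * tv (jnt R) (jnt Q) \<le> \<theta>" "0 \<le> \<theta>" "\<theta> \<le> 2 - 2 / real CARD('t)"
  shows "mi_of b R - mi_of b Q \<le> \<theta> / 2 * log b (real ((CARD('t) * CARD('y) - 1) * (CARD('t) - 1) * (CARD('y) - 1)))
           + 3 * bin_ent b (\<theta> / 2)"
proof -
  define x where "x = \<theta> / 2"
  define T where "T = CARD('t)"
  define Y where "Y = CARD('y)"
  have T1: "T \<ge> 1" and Y1: "Y \<ge> 1" by (simp_all add: T_def Y_def Suc_le_eq)
  have x0: "0 \<le> x" using th by (simp add: x_def)
  have xT: "x \<le> 1 - 1 / real T" using th by (simp add: x_def T_def)
  have x1: "x \<le> 1" using xT T1 by (smt (verit) divide_nonneg_nonneg of_nat_0_le_iff zero_le_one)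
  have e: "tv (jnt R) (jnt Q) \<le> x" using th by (simp add: x_def)
  note fQ = distr2_facts[OF Q] and fR = distr2_facts[OF R]
  have miQ0: "mi_of b Q \<ge> 0" by (rule mi_nonneg[OF b Q])
  show ?thesis
  proof (cases "T = 1 \<or> Y = 1")
    case True
    have "mi_of b R \<le> 0"
    proof -
      have "log b (real T) = 0 \<or> log b (real Y) = 0" using True by auto
      thus ?thesis using mi_le_logs[OF b R] unfolding T_def Y_def by linarith
    qed
    moreover have "x * log b (real ((T * Y - 1) * (T - 1) * (Y - 1))) \<ge> 0"
      using x0 log_nat_nonneg[OF b, of "(T * Y - 1) * (T - 1) * (Y - 1)"] by (intro mult_nonneg_nonneg)
    moreover have "bin_ent b x \<ge> 0" by (rule bin_ent_nonneg[OF b x0 x1])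
    ultimately show ?thesis using miQ0 by (simp add: x_def[symmetric] T_def[symmetric] Y_def[symmetric])
  next
    case False
    hence T2: "T \<ge> 2" and Y2: "Y \<ge> 2" using T1 Y1 by auto
    have "2 * 1 \<le> T * Y" using T2 Y2 by (intro mult_le_mono) auto
    hence TY: "T * Y \<ge> 2" by simp
    have "real (T * Y) \<ge> real 2" using TY by (simp only: of_nat_le_iff)
    hence TYr: "real T * real Y \<ge> 2" by simp
    have logeq: "log b (real ((T * Y - 1) * (T - 1) * (Y - 1)))
        = log b (real (T * Y) - 1) + log b (real T - 1) + log b (real Y - 1)"
    proof -
      have "real ((T * Y - 1) * (T - 1) * (Y - 1)) = (real (T * Y) - 1) * (real T - 1) * (real Y - 1)"
        using T2 Y2 TY by (simp add: of_nat_diff)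
      moreover have "real (T * Y) - 1 > 0" "real T - 1 > 0" "real Y - 1 > 0" using T2 Y2 TYr by auto
      ultimately show ?thesis by (simp add: log_mult)
    qed
    have cardTY: "CARD('t \<times> 'y) = T * Y" by (simp add: T_def Y_def)
    have xTY: "x \<le> 1 - 1 / real (T * Y)"
    proof -
      have "1 / real (T * Y) \<le> 1 / real T" using T2 Y2 by (intro divide_left_mono) auto
      thus ?thesis using xT by linarith
    qed
    have decomp: "mi_of b R - mi_of b Q = (ent b (margT R) - ent b (margT Q)) + (ent b (margY R) - ent b (margY Q))
        + (ent b (jnt Q) - ent b (jnt R))"
      using mi_decomp[of R, OF fR(1)] mi_decomp[of Q, OF fQ(1)] by simp
    have A1: "ent b (margT R) - ent b (margT Q) \<le> fd b (real T) x"
      unfolding T_def by (rule FA2[OF b fR(2) fQ(2) fR(5) fQ(5)]) (use tv_margT_le[of R Q] e xT T_def in auto)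
    have A3: "ent b (jnt Q) - ent b (jnt R) \<le> fd b (real (T * Y)) x"
    proof -
      have "tv (jnt Q) (jnt R) \<le> x" using e tv_sym[OF fR(7) fQ(7)] by simp
      thus ?thesis using FA2[OF b fQ(4) fR(4) fQ(7) fR(7), of x] xTY unfolding cardTY by simp
    qed
    have g: "\<theta> / 2 * log b (real ((CARD('t) * CARD('y) - 1) * (CARD('t) - 1) * (CARD('y) - 1)))
           + 3 * bin_ent b (\<theta> / 2) = fd b (real (T * Y)) x + fd b (real T) x + fd b (real Y) x"
      unfolding x_def[symmetric] T_def[symmetric] Y_def[symmetric] logeq
      by (simp add: fd_def algebra_simps)
    show ?thesis
    proof (cases "x \<le> 1 - 1 / real Y")
      case True
      have A2: "ent b (margY R) - ent b (margY Q) \<le> fd b (real Y) x"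
        unfolding Y_def by (rule FA2[OF b fR(3) fQ(3) fR(6) fQ(6)]) (use tv_margY_le[of R Q] e True Y_def in auto)
      show ?thesis unfolding g decomp using A1 A2 A3 by simp
    next
      case False
      have "mi_of b R - mi_of b Q \<le> log b (real Y)"
        using mi_le_logs(2)[OF b R] miQ0 by (simp add: Y_def)
      also have "\<dots> = fd b (real Y) (1 - 1 / real Y)" using fd_at_top[OF b Y1] by simp
      also have "\<dots> \<le> fd b (real (T * Y)) (1 - 1 / real Y)"
        using Y1 T1 by (intro fd_le_bigger_d[OF b]) auto
      also have "\<dots> \<le> fd b (real (T * Y)) x"
        using False TY xTY Y1 T1 by (intro fd_mono[OF b]) (auto simp: divide_le_eq)
      also have "\<dots> \<le> fd b (real (T * Y)) x + fd b (real T) x + fd b (real Y) x"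
        using fd_nonneg[OF b x0 x1, of T] fd_nonneg[OF b x0 x1, of Y] by simp
      finally show ?thesis unfolding g .
    qed
  qed
qed



lemma hoeff_count:
  fixes D :: "'z pmf" and \<phi> :: "'z \<Rightarrow> bool"
  assumes n: "n > 0" and x: "x \<ge> 0"
  shows "measure_pmf.prob (Pi_pmf {..<n} d (\<lambda>_. D))
           {\<omega>. measure_pmf.prob D {z. \<phi> z} + x \<le> real (card {i\<in>{..<n}. \<phi> (\<omega> i)}) / real n}
         \<le> exp (- 2 * real n * x\<^sup>2)"
proof -
  define p where "p = measure_pmf.prob D {z. \<phi> z}"
  have p01: "p \<in> {0..1}" by (simp add: p_def)
  have B: "map_pmf \<phi> D = bernoulli_pmf p"
  proof (rule pmf_eqI)
    fix v :: bool
    show "pmf (map_pmf \<phi> D) v = pmf (bernoulli_pmf p) v"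
    proof (cases v)
      case True
      thus ?thesis using p01 by (simp add: pmf_map p_def vimage_def)
    next
      case False
      have "measure_pmf.prob D {z. \<not> \<phi> z} = 1 - p"
        unfolding p_def by (subst measure_pmf.prob_compl[symmetric]) (auto intro!: arg_cong[where f="measure_pmf.prob D"])
      thus ?thesis using p01 False by (simp add: pmf_map vimage_def)
    qed
  qed
  have "Pi_pmf {..<n} (\<phi> d) (\<lambda>_. map_pmf \<phi> D) = map_pmf (\<lambda>h. \<phi> \<circ> h) (Pi_pmf {..<n} d (\<lambda>_. D))"
    by (rule Pi_pmf_map) auto
  hence PB: "map_pmf (\<lambda>h. \<phi> \<circ> h) (Pi_pmf {..<n} d (\<lambda>_. D)) = Pi_pmf {..<n} (\<phi> d) (\<lambda>_. bernoulli_pmf p)"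
    using B by simp
  have bin: "binomial_pmf n p = map_pmf (\<lambda>f. card {i\<in>{..<n}. f i}) (Pi_pmf {..<n} (\<phi> d) (\<lambda>_. bernoulli_pmf p))"
    by (rule binomial_pmf_altdef') (use p01 in auto)
  have "measure_pmf.prob (Pi_pmf {..<n} d (\<lambda>_. D))
           {\<omega>. p + x \<le> real (card {i\<in>{..<n}. \<phi> (\<omega> i)}) / real n}
      = measure_pmf.prob (map_pmf (\<lambda>f. card {i\<in>{..<n}. f i}) (map_pmf (\<lambda>h. \<phi> \<circ> h) (Pi_pmf {..<n} d (\<lambda>_. D))))
           {k. p + x \<le> real k / real n}"
    by (simp add: measure_map_pmf vimage_def)
  also have "\<dots> = measure_pmf.prob (binomial_pmf n p) {k. p + x \<le> real k / real n}"
    by (simp only: PB bin)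
  also have "\<dots> \<le> exp (- 2 * real n * x\<^sup>2)"
    using binomial_distribution.prob_ge'[of p n x] p01 n x by (simp add: binomial_distribution_def)
  finally show ?thesis by (simp add: p_def)
qed

definition Qof :: "('x::finite \<times> 'y::finite) pmf \<Rightarrow> ('x \<Rightarrow> 't::finite pmf) \<Rightarrow> 't \<Rightarrow> 'y \<Rightarrow> real" where
  "Qof P K t y = (\<Sum>x\<in>UNIV. pmf P (x, y) * pmf (K x) t)"

lemma distr2_Qof: "distr2 (Qof P K)"
proof -
  have "(\<Sum>t\<in>UNIV. \<Sum>y\<in>UNIV. Qof P K t y) = (\<Sum>x\<in>UNIV. \<Sum>y\<in>UNIV. pmf P (x, y) * (\<Sum>t\<in>UNIV. pmf (K x) t))"
  proof -
    define g where "g t y x = pmf P (x, y) * pmf (K x) t" for t y x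
    have "(\<Sum>t\<in>UNIV. \<Sum>y\<in>UNIV. \<Sum>x\<in>UNIV. g t y x) = (\<Sum>y\<in>UNIV. \<Sum>t\<in>UNIV. \<Sum>x\<in>UNIV. g t y x)"
      by (rule sum.swap)
    also have "\<dots> = (\<Sum>y\<in>UNIV. \<Sum>x\<in>UNIV. \<Sum>t\<in>UNIV. g t y x)"
      by (rule sum.cong[OF refl], rule sum.swap)
    also have "\<dots> = (\<Sum>x\<in>UNIV. \<Sum>y\<in>UNIV. \<Sum>t\<in>UNIV. g t y x)"
      by (rule sum.swap)
    finally show ?thesis unfolding Qof_def g_def by (simp only: sum_distrib_left)
  qed
  also have "\<dots> = (\<Sum>x\<in>UNIV. \<Sum>y\<in>UNIV. pmf P (x, y))"
    by (simp add: sum_pmf_eq_1)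
  also have "\<dots> = 1" by (simp add: sum_UNIV_prod[symmetric] sum_pmf_eq_1)
  finally show ?thesis by (simp add: distr2_def Qof_def sum_nonneg)
qed

lemma card_as_sum: "finite A \<Longrightarrow> real (card {i\<in>A. P i}) = (\<Sum>i\<in>A. if P i then 1 else 0)"
  by (simp add: sum.If_cases Int_def)

lemma emp_sum_set:
  fixes \<omega> :: "nat \<Rightarrow> 'x \<times> 'y::finite \<times> 't::finite"
  shows "(\<Sum>z\<in>A. jnt (emp_TY n \<omega>) z) = real (card {i\<in>{..<n}. (snd (snd (\<omega> i)), fst (snd (\<omega> i))) \<in> A}) / real n"
proof -
  have cz: "jnt (emp_TY n \<omega>) z = (\<Sum>i\<in>{..<n}. if (snd (snd (\<omega> i)), fst (snd (\<omega> i))) = z then 1 else 0) / real n" for z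
  proof -
    have "real (card {i\<in>{..<n}. fst (snd (\<omega> i)) = snd z \<and> snd (snd (\<omega> i)) = fst z})
       = (\<Sum>i\<in>{..<n}. if (snd (snd (\<omega> i)), fst (snd (\<omega> i))) = z then 1 else 0)"
      by (subst card_as_sum) (auto intro!: sum.cong simp: prod_eq_iff)
    thus ?thesis by (simp add: jnt_def emp_TY_def)
  qed
  have "(\<Sum>z\<in>A. jnt (emp_TY n \<omega>) z) = (\<Sum>z\<in>A. \<Sum>i\<in>{..<n}. if (snd (snd (\<omega> i)), fst (snd (\<omega> i))) = z then 1 else 0) / real n"
    unfolding cz sum_divide_distrib ..
  also have "(\<Sum>z\<in>A. \<Sum>i\<in>{..<n}. if (snd (snd (\<omega> i)), fst (snd (\<omega> i))) = z then 1 else (0::real))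
      = (\<Sum>i\<in>{..<n}. if (snd (snd (\<omega> i)), fst (snd (\<omega> i))) \<in> A then 1 else 0)"
    by (subst sum.swap) (simp add: sum.delta)
  also have "\<dots> = real (card {i\<in>{..<n}. (snd (snd (\<omega> i)), fst (snd (\<omega> i))) \<in> A})"
    by (rule card_as_sum[symmetric]) simp
  finally show ?thesis .
qed

lemma distr2_emp:
  fixes \<omega> :: "nat \<Rightarrow> 'x \<times> 'y::finite \<times> 't::finite"
  assumes n: "n > 0"
  shows "distr2 (emp_TY n \<omega>)"
proof -
  have "(\<Sum>t\<in>UNIV. \<Sum>y\<in>UNIV. emp_TY n \<omega> t y) = (\<Sum>z\<in>UNIV. jnt (emp_TY n \<omega>) z)"
    by (simp add: sum_UNIV_prod jnt_def)
  also have "\<dots> = 1" using n by (simp add: emp_sum_set)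
  finally show ?thesis by (simp add: distr2_def emp_TY_def)
qed



definition gTY :: "'x \<times> 'y \<times> 't \<Rightarrow> 't \<times> 'y" where
  "gTY w = (snd (snd w), fst (snd w))"

lemma map_triple:
  "map_pmf gTY (triple_pmf P K) = bind_pmf P (\<lambda>(x, y'). map_pmf (\<lambda>t. (t, y')) (K x))"
  unfolding triple_pmf_def map_bind_pmf
  by (intro bind_pmf_cong refl) (auto simp: map_pmf_comp gTY_def)

lemma pmf_triple_TY:
  fixes P :: "('x::finite \<times> 'y::finite) pmf" and K :: "'x \<Rightarrow> 't::finite pmf"
  shows "pmf (map_pmf gTY (triple_pmf P K)) (t, y) = Qof P K t y"
proof -
  have inner: "pmf (map_pmf (\<lambda>t'. (t', y')) (K x)) (t, y) = (if y' = y then pmf (K x) t else 0)" for x y'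
  proof -
    have "(\<lambda>t'. (t', y')) -` {(t, y)} = (if y' = y then {t} else {})" by auto
    thus ?thesis by (simp add: pmf_map measure_pmf_single)
  qed
  have "pmf (map_pmf gTY (triple_pmf P K)) (t, y)
      = (\<Sum>a\<in>UNIV. pmf P a * pmf ((\<lambda>(x, y'). map_pmf (\<lambda>t. (t, y')) (K x)) a) (t, y))"
    unfolding map_triple pmf_bind by (subst integral_measure_pmf[of UNIV]) auto
  also have "\<dots> = (\<Sum>x\<in>UNIV. \<Sum>y'\<in>UNIV. pmf P (x, y') * (if y' = y then pmf (K x) t else 0))"
    by (simp add: sum_UNIV_prod inner)
  also have "\<dots> = Qof P K t y" by (simp add: Qof_def if_distrib cong: if_cong)
  finally show ?thesis .
qed

lemma prob_triple_set:
  fixes P :: "('x::finite \<times> 'y::finite) pmf" and K :: "'x \<Rightarrow> 't::finite pmf"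
  shows "measure_pmf.prob (triple_pmf P K) {w. gTY w \<in> A} = (\<Sum>z\<in>A. jnt (Qof P K) z)"
proof -
  have "measure_pmf.prob (triple_pmf P K) {w. gTY w \<in> A} = measure_pmf.prob (map_pmf gTY (triple_pmf P K)) A"
    by (simp add: measure_map_pmf vimage_def)
  also have "\<dots> = (\<Sum>z\<in>A. pmf (map_pmf gTY (triple_pmf P K)) z)"
    by (rule measure_measure_pmf_finite) simp
  also have "\<dots> = (\<Sum>z\<in>A. jnt (Qof P K) z)"
    by (intro sum.cong refl) (auto simp: jnt_def pmf_triple_TY)
  finally show ?thesis .
qed

lemma weissman:
  fixes P :: "('x::finite \<times> 'y::finite) pmf" and K :: "'x \<Rightarrow> 't::finite pmf"
  assumes n: "n > 0" and x: "x \<ge> 0"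
  shows "measure_pmf.prob (sample_pmf n P K) {\<omega>. tv (jnt (emp_TY n \<omega>)) (jnt (Qof P K)) > x}
         \<le> ((2::real) ^ (CARD('t) * CARD('y)) - 2) * exp (- 2 * real n * x\<^sup>2)"
proof -
  define Q where "Q = jnt (Qof P K)"
  define S where "S = Pow (UNIV :: ('t \<times> 'y) set) - {{}, UNIV}"
  define E where "E A = {\<omega> :: nat \<Rightarrow> 'x \<times> 'y \<times> 't. measure_pmf.prob (triple_pmf P K) {w. gTY w \<in> A} + x
       \<le> real (card {i\<in>{..<n}. gTY (\<omega> i) \<in> A}) / real n}" for A
  have sub: "{\<omega> :: nat \<Rightarrow> 'x \<times> 'y \<times> 't. tv (jnt (emp_TY n \<omega>)) Q > x} \<subseteq> (\<Union>A\<in>S. E A)"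
  proof
    fix \<omega> :: "nat \<Rightarrow> 'x \<times> 'y \<times> 't" assume "\<omega> \<in> {\<omega>. tv (jnt (emp_TY n \<omega>)) Q > x}"
    hence tvx: "tv (jnt (emp_TY n \<omega>)) Q > x" by simp
    define R where "R = jnt (emp_TY n \<omega>)"
    define A where "A = {z. R z > Q z}"
    have "tv R Q = (\<Sum>z\<in>UNIV. if z \<in> A then R z - Q z else 0)"
      unfolding tv_def A_def by (intro sum.cong) auto
    also have "\<dots> = (\<Sum>z\<in>A. R z - Q z)" by (simp add: sum.inter_restrict[symmetric])
    finally have tvA: "tv R Q = (\<Sum>z\<in>A. R z - Q z)" .
    have RA: "(\<Sum>z\<in>A. R z) = real (card {i\<in>{..<n}. gTY (\<omega> i) \<in> A}) / real n"
      unfolding R_def emp_sum_set gTY_def ..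
    have QA: "(\<Sum>z\<in>A. Q z) = measure_pmf.prob (triple_pmf P K) {w. gTY w \<in> A}"
      unfolding Q_def prob_triple_set ..
    have "A \<noteq> {}" using tvx tvA x R_def by auto
    moreover have "A \<noteq> UNIV"
    proof
      assume "A = UNIV"
      hence "tv R Q = sum R UNIV - sum Q UNIV" using tvA by (simp add: sum_subtractf)
      also have "\<dots> = 0"
        using distr2_facts(7)[OF distr2_emp[OF n, of \<omega>]] distr2_facts(7)[OF distr2_Qof[of P K]]
        by (simp add: R_def Q_def)
      finally show False using tvx x R_def by simp
    qed
    ultimately have "A \<in> S" by (simp add: S_def)
    moreover have "\<omega> \<in> E A"
      using tvx tvA RA QA unfolding E_def R_def[symmetric] by (simp add: sum_subtractf)
    ultimately show "\<omega> \<in> (\<Union>A\<in>S. E A)" by blast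
  qed
  have "measure_pmf.prob (sample_pmf n P K) {\<omega>. tv (jnt (emp_TY n \<omega>)) Q > x}
      \<le> measure_pmf.prob (sample_pmf n P K) (\<Union>A\<in>S. E A)"
    by (rule measure_pmf.finite_measure_mono[OF sub]) simp
  also have "\<dots> \<le> (\<Sum>A\<in>S. measure_pmf.prob (sample_pmf n P K) (E A))"
    by (rule measure_pmf.finite_measure_subadditive_finite) (auto simp: S_def)
  also have "\<dots> \<le> (\<Sum>A\<in>S. exp (- 2 * real n * x\<^sup>2))"
  proof (intro sum_mono)
    fix A
    show "measure_pmf.prob (sample_pmf n P K) (E A) \<le> exp (- 2 * real n * x\<^sup>2)"
      unfolding sample_pmf_def E_def
      using hoeff_count[OF n x, of undefined "triple_pmf P K" "\<lambda>w. gTY w \<in> A"] by simp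
  qed
  also have "\<dots> = real (card S) * exp (- 2 * real n * x\<^sup>2)" by simp
  also have "real (card S) = (2::real) ^ (CARD('t) * CARD('y)) - 2"
  proof -
    have ne: "({}::('t \<times> 'y) set) \<noteq> UNIV" by auto
    have "card S = card (Pow (UNIV :: ('t \<times> 'y) set)) - card {{}, (UNIV :: ('t \<times> 'y) set)}"
      unfolding S_def by (rule card_Diff_subset) auto
    also have "\<dots> = 2 ^ (CARD('t) * CARD('y)) - 2" using ne by (simp add: card_Pow)
    finally have cS: "card S = 2 ^ (CARD('t) * CARD('y)) - 2" .
    have "(2::nat) ^ 1 \<le> 2 ^ (CARD('t) * CARD('y))"
      by (intro power_increasing) (auto simp: Suc_le_eq)
    thus ?thesis unfolding cS by (simp add: of_nat_diff)
  qed
  finally show ?thesis by (simp add: Q_def)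
qed



theorem proposition1:
  fixes P :: "('x::finite \<times> 'y::finite) pmf"
    and K :: "'l \<Rightarrow> 'x \<Rightarrow> 't::finite pmf"
    and lam :: 'l
    and b \<alpha> u :: real
    and n :: nat
  assumes "b > 1"
    and "\<alpha> \<ge> 0"
    and "n > 0"
    and "true_MI b P (K lam) < \<alpha>"
    and "0 \<le> u" and "u \<le> 1"
  shows "measure_pmf.prob (sample_pmf n P (K lam))
           {\<omega>. pval TYPE('t) TYPE('y) b \<alpha> n \<omega> \<le> u} \<le> u"
proof -
  note b = assms(1) and al = assms(2) and n = assms(3) and H0 = assms(4) and u0 = assms(5) and u1 = assms(6)
  define Kl where "Kl = K lam"
  define Q where "Q = Qof P Kl"
  have DQ: "distr2 Q" unfolding Q_def by (rule distr2_Qof)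
  have trueQ: "true_MI b P Kl = mi_of b Q" unfolding true_MI_def Q_def Qof_def[abs_def] ..
  define T where "T = CARD('t)"
  define Y where "Y = CARD('y)"
  define c where "c = (2::real) ^ (T * Y) - 2"
  define th where "th e = theta TYPE('t) TYPE('y) e n" for e
  have th_eq: "th e = sqrt (2 / real n * ln (c / e))" for e
    by (simp add: th_def theta_def c_def T_def Y_def)
  have c0: "c = 0 \<or> c \<ge> 2"
  proof -
    have "T * Y \<ge> 1" by (simp add: T_def Y_def Suc_le_eq)
    then obtain k where k: "T * Y = Suc k" by (cases "T * Y") auto
    show ?thesis
    proof (cases "k = 0")
      case True thus ?thesis by (simp add: c_def k)
    next
      case False
      hence "(2::real) ^ 1 \<le> 2 ^ k" by (intro power_increasing) auto
      hence "(2::real) ^ k \<ge> 2" by simp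
      thus ?thesis by (simp add: c_def k)
    qed
  qed
  have ln_nonneg: "ln (c / e) \<ge> 0" if "0 < e" "e \<le> 1" for e
  proof (cases "c = 0")
    case False
    hence "c \<ge> 2" using c0 by simp
    hence "c / e \<ge> 1" using that by (simp add: field_simps)
    thus ?thesis by simp
  qed simp
  have th0: "th e \<ge> 0" if "0 < e" "e \<le> 1" for e
    unfolding th_eq using ln_nonneg[OF that] by simp
  have th_mono: "th e \<le> th s" if "0 < s" "s \<le> e" "e \<le> 1" for s e
  proof (cases "c = 0")
    case False
    hence cpos: "c > 0" using c0 by auto
    have "c / e \<le> c / s" using that cpos by (intro divide_left_mono) auto
    hence "ln (c / e) \<le> ln (c / s)" using that cpos by simp
    thus ?thesis unfolding th_eq by (intro real_sqrt_le_mono mult_left_mono) auto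
  qed (simp add: th_eq)
  show ?thesis
  proof (cases "u = 1")
    case True
    show ?thesis unfolding True by (rule measure_pmf.prob_le_1)
  next
    case False
    hence u1': "u < 1" using u1 by simp
    have key: "measure_pmf.prob (sample_pmf n P Kl) {\<omega>. pval TYPE('t) TYPE('y) b \<alpha> n \<omega> \<le> u} \<le> e"
      if e: "u < e" "e < 1" for e
    proof -
      have epos: "e > 0" using e u0 by simp
      have sub: "{\<omega> :: nat \<Rightarrow> 'x \<times> 'y \<times> 't. pval TYPE('t) TYPE('y) b \<alpha> n \<omega> \<le> u} \<subseteq> {\<omega>. tv (jnt (emp_TY n \<omega>)) (jnt Q) > th e / 2}"
      proof
        fix \<omega> :: "nat \<Rightarrow> 'x \<times> 'y \<times> 't"
        assume "\<omega> \<in> {\<omega>. pval TYPE('t) TYPE('y) b \<alpha> n \<omega> \<le> u}"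
        hence pv: "pval TYPE('t) TYPE('y) b \<alpha> n \<omega> \<le> u" by simp
        define S where "S = {\<epsilon>\<in>{0<..1}. plugin_MI b n \<omega> - DeltaI TYPE('t) TYPE('y) b (theta TYPE('t) TYPE('y) \<epsilon> n) > \<alpha>} \<union> {1}"
        have "Inf S < e" using pv e unfolding pval_def S_def by simp
        then obtain s where sS: "s \<in> S" and se: "s < e" using cInf_lessD[of S e] by (auto simp: S_def)
        hence s1: "s \<noteq> 1" using e by auto
        hence s: "0 < s" "s \<le> 1" and rej: "plugin_MI b n \<omega> - DeltaI TYPE('t) TYPE('y) b (th s) > \<alpha>"
          using sS by (auto simp: S_def th_def)
        define R where "R = emp_TY n \<omega>"
        have DR: "distr2 R" unfolding R_def by (rule distr2_emp[OF n])
        show "\<omega> \<in> {\<omega>. tv (jnt (emp_TY n \<omega>)) (jnt Q) > th e / 2}"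
        proof (rule ccontr)
          assume "\<omega> \<notin> {\<omega>. tv (jnt (emp_TY n \<omega>)) (jnt Q) > th e / 2}"
          hence "tv (jnt R) (jnt Q) \<le> th e / 2" by (simp add: R_def)
          moreover have "th e \<le> th s" using th_mono[of s e] s se e by simp
          ultimately have tvs: "2 * tv (jnt R) (jnt Q) \<le> th s" by simp
          show False
          proof (cases "th s \<le> 2 - 2 / real CARD('t)")
            case True
            have DI: "DeltaI TYPE('t) TYPE('y) b (th s) = th s / 2 * log b (real ((CARD('t) * CARD('y) - 1) * (CARD('t) - 1) * (CARD('y) - 1)))
           + 3 * bin_ent b (th s / 2)"
              unfolding DeltaI_def by (rule if_P[OF True])
            have "mi_of b R - mi_of b Q \<le> DeltaI TYPE('t) TYPE('y) b (th s)"
              using mi_cont[OF b DQ DR tvs th0[OF s] True] unfolding DI .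
            hence "plugin_MI b n \<omega> - DeltaI TYPE('t) TYPE('y) b (th s) \<le> true_MI b P Kl"
              using trueQ by (simp add: plugin_MI_def R_def)
            thus False using rej H0 by (simp add: Kl_def)
          next
            case False
            hence "DeltaI TYPE('t) TYPE('y) b (th s) = log b (real CARD('t))" unfolding DeltaI_def by (rule if_not_P)
            moreover have "plugin_MI b n \<omega> \<le> log b (real CARD('t))"
              using mi_le_logs(1)[OF b DR] by (simp add: plugin_MI_def R_def)
            ultimately show False using rej al by simp
          qed
        qed
      qed
      have "measure_pmf.prob (sample_pmf n P Kl) {\<omega>. pval TYPE('t) TYPE('y) b \<alpha> n \<omega> \<le> u}
          \<le> measure_pmf.prob (sample_pmf n P Kl) {\<omega>. tv (jnt (emp_TY n \<omega>)) (jnt Q) > th e / 2}"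
        by (rule measure_pmf.finite_measure_mono[OF sub]) (simp only: sets_measure_pmf UNIV_I)
      also have "\<dots> \<le> c * exp (- 2 * real n * (th e / 2)\<^sup>2)"
      proof -
        have th_half: "th e / 2 \<ge> 0" using th0[of e] epos e by simp
        show ?thesis unfolding Q_def c_def T_def Y_def by (rule weissman[OF n th_half])
      qed
      also have "\<dots> \<le> e"
      proof (cases "c = 0")
        case False
        hence cpos: "c > 0" using c0 by auto
        have "(th e)\<^sup>2 = 2 / real n * ln (c / e)"
          unfolding th_eq using ln_nonneg[of e] epos e n by simp
        hence "- 2 * real n * (th e / 2)\<^sup>2 = - ln (c / e)"
          using n by (simp add: power_divide field_simps)
        hence "exp (- 2 * real n * (th e / 2)\<^sup>2) = e / c"
          using cpos epos by (simp add: ln_div exp_diff)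
        thus ?thesis using cpos by simp
      qed (use epos in simp)
      finally show ?thesis .
    qed
    show ?thesis unfolding Kl_def[symmetric]
      by (rule dense_ge_bounded[OF u1']) (erule (1) key)
  qed
qed

end
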